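(* Let $q>2$ be a power of $2$ and let $U$ be an intersecting family of $q^2-\varepsilon$ polynomials over $\mathbb{F}_q$ of degree at most $2$, where $\varepsilon<\frac{q\sqrt{q}}{4}-\frac{q}{8}-\frac{\sqrt{q}}{8}$. Then the graphs of the polynomials in $U$ share a common point.
   Context: The graph of $f\colon\mathbb{F}_q\to\mathbb{F}_q$ is $\{(x,f(x)):x\in\mathbb{F}_q\}$. A set of polynomials over $\mathbb{F}_q$ is intersecting if the graphs of any two of its members share at least one point. *)

theory Defs
  imports Complex_Main "HOL-Computational_Algebra.Polynomial" "HOL-Library.Cardinality"
begin

definition poly_graph :: "'a::comm_ring_1 poly \<Rightarrow> ('a \<times> 'a) set" where
  "poly_graph p = {(x, poly p x) | x. True}"

definition intersecting :: "'a::comm_ring_1 poly set \<Rightarrow> bool" where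
  "intersecting U \<longleftrightarrow> (\<forall>f\<in>U. \<forall>g\<in>U. poly_graph f \<inter> poly_graph g \<noteq> {})"

end

theory Submission
  imports Defs
begin

lemma char2:
  assumes "CARD('a::{finite,field}) = 2^k" "k \<ge> 1"
  shows "(2::'a) = 0"
proof -
  have "(\<Sum>x\<in>(UNIV::'a set). x + 1) = (\<Sum>x\<in>UNIV. x)"
    by (rule sum.reindex_bij_witness[of _ "\<lambda>x. x - 1" "\<lambda>x. x + 1"]) auto
  hence "of_nat (card (UNIV::'a set)) = (0::'a)"
    by (simp add: sum.distrib)
  hence "(2::'a)^k = 0" using assms(1) by simp
  thus ?thesis by simp
qed

definition ev :: "('a::comm_ring_1 \<times> 'a \<times> 'a) \<Rightarrow> 'a \<Rightarrow> 'a" where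
  "ev u x = fst u * x^2 + fst (snd u) * x + snd (snd u)"

locale fam =
  fixes V :: "('a::{finite,field} \<times> 'a \<times> 'a) set"
  assumes two: "(2::'a) = 0"
    and inter: "\<forall>u\<in>V. \<forall>v\<in>V. \<exists>x. ev u x = ev v x"
begin

lemma add_self: "(x::'a) + x = 0"
proof -
  have "x + x = 2 * x" by simp
  thus ?thesis using two by simp
qed

lemma neg_id: "- (x::'a) = x"
  using add_self[of x] by (metis add_eq_0_iff)

lemma diff_add: "(x::'a) - y = x + y"
  by (metis diff_minus_eq_add neg_id)

lemma sq_add: "((x::'a) + y)^2 = x^2 + y^2"
proof -
  have "(x + y)^2 = x^2 + y^2 + 2 * x * y" by (simp add: power2_eq_square algebra_simps)
  thus ?thesis using two by simp
qed

lemma sq_inj: "(x::'a)^2 = y^2 \<Longrightarrow> x = y"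
proof -
  assume "x^2 = y^2"
  hence "(x + y)^2 = 0" by (simp add: sq_add add_self)
  hence "x + y = 0" by simp
  thus "x = y" by (metis add_self add_left_cancel)
qed

definition H0 :: "'a set" where "H0 = range (\<lambda>u::'a. u^2 + u)"

lemma H0_0[simp]: "0 \<in> H0" unfolding H0_def by (rule range_eqI[of _ _ 0]) simp

lemma H0_add: "z \<in> H0 \<Longrightarrow> w \<in> H0 \<Longrightarrow> z + w \<in> H0"
  unfolding H0_def
proof -
  assume "z \<in> range (\<lambda>u::'a. u^2 + u)" "w \<in> range (\<lambda>u::'a. u^2 + u)"
  then obtain u v where "z = u^2 + u" "w = v^2 + v" by auto
  hence "z + w = (u+v)^2 + (u+v)" by (simp add: sq_add algebra_simps)
  thus "z + w \<in> range (\<lambda>u::'a. u^2 + u)" by auto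
qed

lemma phi_eq: "(u::'a)^2 + u = v^2 + v \<longleftrightarrow> v = u \<or> v = u + 1"
proof
  assume "u^2 + u = v^2 + v"
  hence "(v + u)^2 + (v + u) = 0"
    by (simp add: sq_add) (metis add.assoc add.commute add_self add_0_right)
  hence "(v + u) * (v + u + 1) = 0" by (simp add: power2_eq_square algebra_simps)
  hence "v + u = 0 \<or> v + u + 1 = 0" by simp
  thus "v = u \<or> v = u + 1"
    by (metis add_self add.assoc add_0_right add.commute add_left_cancel)
next
  assume "v = u \<or> v = u + 1"
  thus "u^2 + u = v^2 + v"
  proof
    assume "v = u + 1"
    thus ?thesis using two by (simp add: sq_add algebra_simps)
  qed simp
qed

lemma card_H0: "2 * card H0 = CARD('a)"
proof -
  have g: "(\<Sum>h\<in>H0. (\<Sum>u\<in>{u\<in>(UNIV::'a set). u^2 + u = h}. 1::nat)) = (\<Sum>u\<in>(UNIV::'a set). 1)"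
    by (rule sum.group) (auto simp: H0_def)
  have "\<And>h. h \<in> H0 \<Longrightarrow> card {v\<in>(UNIV::'a set). v^2 + v = h} = 2"
  proof -
    fix h assume "h \<in> H0"
    then obtain u where u: "h = u^2 + u" unfolding H0_def by auto
    have "{v\<in>(UNIV::'a set). v^2 + v = h} = {u, u+1}"
    proof (intro set_eqI iffI)
      fix v assume "v \<in> {v\<in>(UNIV::'a set). v^2 + v = h}"
      hence "u^2 + u = v^2 + v" using u by simp
      thus "v \<in> {u, u+1}" using phi_eq[of u v] by blast
    next
      fix v assume "v \<in> {u, u+1}"
      hence "u^2 + u = v^2 + v" using phi_eq[of u v] by blast
      thus "v \<in> {v\<in>(UNIV::'a set). v^2 + v = h}" using u by simp
    qed
    moreover have "u \<noteq> u + 1" by simp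
    ultimately show "card {v\<in>(UNIV::'a set). v^2 + v = h} = 2" by simp
  qed
  hence "(\<Sum>h\<in>H0. (\<Sum>u\<in>{u\<in>(UNIV::'a set). u^2 + u = h}. 1::nat)) = (\<Sum>h\<in>H0. 2)"
    by (intro sum.cong) auto
  with g show ?thesis by simp
qed

lemma H0_two: "z \<notin> H0 \<Longrightarrow> w \<notin> H0 \<Longrightarrow> z + w \<in> H0"
proof (rule ccontr)
  assume z: "z \<notin> H0" and w: "w \<notin> H0" and zw: "z + w \<notin> H0"
  have disj: "H0 \<inter> ((+) z ` H0) = {}"
  proof (rule ccontr)
    assume "H0 \<inter> (+) z ` H0 \<noteq> {}"
    then obtain h where "h \<in> H0" "z + h \<in> H0" by auto
    hence "(z + h) + h \<in> H0" by (rule_tac H0_add) auto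
    thus False using z by (simp add: add.assoc add_self)
  qed
  have "card ((+) z ` H0) = card H0" by (rule card_image) (simp add: inj_on_def)
  hence "card (H0 \<union> (+) z ` H0) = CARD('a)"
    using card_Un_disjoint[of H0 "(+) z ` H0"] disj card_H0 by simp
  hence "H0 \<union> (+) z ` H0 = UNIV" by (simp add: card_eq_UNIV_imp_eq_UNIV)
  hence "w \<in> (+) z ` H0" using w by auto
  then obtain h where "h \<in> H0" "w = z + h" by auto
  hence "z + w = h" by (simp add: add_self flip: add.assoc)
  thus False using zw \<open>h \<in> H0\<close> by simp
qed

definition chi :: "'a \<Rightarrow> real" where "chi z = (if z \<in> H0 then 1 else -1)"

lemma chi_add: "chi (z + w) = chi z * chi w"
  unfolding chi_def
proof -
  have a: "z \<in> H0 \<Longrightarrow> w \<in> H0 \<Longrightarrow> z + w \<in> H0" by (rule H0_add)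
  have b: "z \<in> H0 \<Longrightarrow> w \<notin> H0 \<Longrightarrow> z + w \<notin> H0"
    using H0_add[of z "z + w"] by (auto simp: add_self simp flip: add.assoc)
  have c: "z \<notin> H0 \<Longrightarrow> w \<in> H0 \<Longrightarrow> z + w \<notin> H0"
    using H0_add[of w "z + w"] by (auto simp: add_self add.commute[of z] simp flip: add.assoc)
  show "(if z + w \<in> H0 then 1 else - 1) = (if z \<in> H0 then 1 else - 1) * (if w \<in> H0 then 1 else (- 1::real))"
    using a b c H0_two[of z w] by auto
qed

lemma chi_0[simp]: "chi 0 = 1" by (simp add: chi_def)
lemma chi_sq[simp]: "chi z * chi z = 1" by (simp add: chi_def)

lemma sum_chi: "(\<Sum>z\<in>(UNIV::'a set). chi z) = 0"
proof -
  have "(\<Sum>z\<in>(UNIV::'a set). chi z) = (\<Sum>z\<in>H0. 1) + (\<Sum>z\<in>UNIV - H0. -1)"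
    unfolding chi_def
    by (subst sum.If_cases) (auto simp: Int_absorb1 Diff_eq)
  also have "\<dots> = real (card H0) - real (CARD('a) - card H0)" by (simp add: card_Diff_subset)
  also have "\<dots> = 0" using card_H0 by simp
  finally show ?thesis .
qed

lemma sum_chi_mult: "\<mu> \<noteq> 0 \<Longrightarrow> (\<Sum>z\<in>(UNIV::'a set). chi (\<mu> * z)) = 0"
proof -
  assume mu: "\<mu> \<noteq> 0"
  have "(\<Sum>z\<in>(UNIV::'a set). chi (\<mu> * z)) = (\<Sum>z\<in>(UNIV::'a set). chi z)"
    by (rule sum.reindex_bij_witness[of _ "\<lambda>z. z / \<mu>" "\<lambda>z. \<mu> * z"]) (use mu in auto)
  thus ?thesis using sum_chi by simp
qed

end

context fam begin

lemma chi_neg: "chi (- z) = chi z" by (simp add: neg_id)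

lemma HL:
  fixes X \<Lambda> :: "'a set"
  assumes z: "0 \<notin> \<Lambda>" and cond: "\<forall>l\<in>\<Lambda>. \<forall>x\<in>X. \<forall>x'\<in>X. chi (l * (x - x')) = 1"
  shows "card X * (card \<Lambda> + 1) \<le> CARD('a)"
proof (cases "X = {}")
  case True thus ?thesis by simp
next
  case False
  then obtain x0 where x0: "x0 \<in> X" by auto
  define L0 where "L0 = insert 0 \<Lambda>"
  have cL0: "card L0 = card \<Lambda> + 1" unfolding L0_def using z by simp
  define e where "e l = chi (l * x0)" for l
  define S where "S z = (\<Sum>l\<in>L0. e l * chi (l * z))" for z
  have orth: "(\<Sum>z\<in>(UNIV::'a set). chi (l * z) * chi (l' * z)) = (if l = l' then real CARD('a) else 0)" for l l'
  proof -
    have "(\<Sum>z\<in>(UNIV::'a set). chi (l * z) * chi (l' * z)) = (\<Sum>z\<in>(UNIV::'a set). chi ((l + l') * z))"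
      by (simp add: chi_add distrib_right)
    also have "\<dots> = (if l = l' then real CARD('a) else 0)"
    proof (cases "l = l'")
      case True thus ?thesis by (simp add: add_self)
    next
      case False
      hence "l + l' \<noteq> 0" by (metis add_self add_left_cancel)
      thus ?thesis using False sum_chi_mult by simp
    qed
    finally show ?thesis .
  qed
  have tot: "(\<Sum>z\<in>(UNIV::'a set). (S z)^2) = real (card L0) * real CARD('a)"
  proof -
    have "(\<Sum>z\<in>(UNIV::'a set). (S z)^2)
        = (\<Sum>z\<in>(UNIV::'a set). \<Sum>l\<in>L0. \<Sum>l'\<in>L0. e l * e l' * (chi (l * z) * chi (l' * z)))"
      unfolding S_def power2_eq_square sum_product by (simp add: mult_ac)
    also have "\<dots> = (\<Sum>l\<in>L0. \<Sum>l'\<in>L0. e l * e l' * (\<Sum>z\<in>(UNIV::'a set). chi (l * z) * chi (l' * z)))"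
      by (simp add: sum.swap[of _ UNIV] sum_distrib_left)
    also have "\<dots> = (\<Sum>l\<in>L0. \<Sum>l'\<in>L0. e l * e l' * (if l = l' then real CARD('a) else 0))"
      by (simp add: orth)
    also have "\<dots> = (\<Sum>l\<in>L0. e l * e l * real CARD('a))"
      by (simp add: if_distrib[of "\<lambda>t. _ * t"] sum.If_cases[where P="\<lambda>l'. _ = l'"] cong: if_cong)
    also have "\<dots> = real (card L0) * real CARD('a)"
      by (simp add: e_def)
    finally show ?thesis .
  qed
  have onX: "S z = real (card L0)" if "z \<in> X" for z
  proof -
    have "chi (l * z) = e l" if "l \<in> L0" for l
    proof (cases "l = 0")
      case True thus ?thesis by (simp add: e_def)
    next
      case False
      hence "l \<in> \<Lambda>" using that L0_def by auto
      hence c: "chi (l * (z - x0)) = 1" using cond \<open>z \<in> X\<close> x0 by blast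
      have "l * z = l * x0 + l * (z - x0)" by (simp add: algebra_simps)
      hence "chi (l * z) = chi (l * x0) * chi (l * (z - x0))" by (simp add: chi_add)
      thus ?thesis using c by (simp add: e_def)
    qed
    hence "S z = (\<Sum>l\<in>L0. e l * e l)" unfolding S_def by (intro sum.cong) auto
    also have "\<dots> = real (card L0)" by (simp add: e_def)
    finally show ?thesis .
  qed
  have "(\<Sum>z\<in>X. (S z)^2) \<le> (\<Sum>z\<in>(UNIV::'a set). (S z)^2)"
    by (rule sum_mono2) auto
  moreover have "(\<Sum>z\<in>X. (S z)^2) = real (card X) * (real (card L0))^2"
    using onX by simp
  ultimately have "real (card X) * (real (card L0))^2 \<le> real (card L0) * real CARD('a)"
    using tot by simp
  hence "real (card X) * real (card L0) \<le> real CARD('a)"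
    using cL0 by (simp add: power2_eq_square)
  hence "card X * card L0 \<le> CARD('a)" by (simp flip: of_nat_mult)
  thus ?thesis using cL0 by simp
qed

end

lemma sum_lb2:
  fixes f :: "'b \<Rightarrow> nat"
  assumes "finite L" "E \<subseteq> L" "\<forall>h\<in>L. 1 \<le> f h" "\<forall>h\<in>L-E. 2 \<le> f h"
  shows "2 * card L \<le> sum f L + card E"
proof -
  have fE: "finite E" using assms(1,2) finite_subset by blast
  have "sum f L = sum f E + sum f (L - E)"
    using assms(1,2) by (metis sum.subset_diff add.commute)
  moreover have "card E \<le> sum f E"
    using assms(2,3) sum_mono[of E "\<lambda>_. 1::nat" f] by auto
  moreover have "2 * card (L - E) \<le> sum f (L - E)"
    using assms(4) sum_mono[of "L - E" "\<lambda>_. 2::nat" f] by auto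
  moreover have "card (L - E) = card L - card E" using assms(1,2) fE card_Diff_subset by blast
  moreover have "card E \<le> card L" using assms(1,2) card_mono by blast
  ultimately show ?thesis by linarith
qed

lemma three_pts:
  fixes u v :: "'a::field \<times> 'a \<times> 'a"
  assumes d: "x1 \<noteq> x2" "x1 \<noteq> x3" "x2 \<noteq> x3"
    and e: "ev u x1 = ev v x1" "ev u x2 = ev v x2" "ev u x3 = ev v x3"
  shows "u = v"
proof -
  obtain a b c where u: "u = (a, b, c)" by (cases u) auto
  obtain a' b' c' where v: "v = (a', b', c')" by (cases v) auto
  define A where "A = a - a'"
  define B where "B = b - b'"
  define C where "C = c - c'"
  have h: "A * x^2 + B * x + C = 0" if "ev u x = ev v x" for x
    using that unfolding A_def B_def C_def u v ev_def by (simp add: algebra_simps)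
  have h1: "A * x1^2 + B * x1 + C = 0" and h2: "A * x2^2 + B * x2 + C = 0"
    and h3: "A * x3^2 + B * x3 + C = 0" using h e by auto
  have "(x1 - x2) * (A * (x1 + x2) + B) = (A * x1^2 + B * x1 + C) - (A * x2^2 + B * x2 + C)"
    by (simp add: algebra_simps power2_eq_square)
  hence k1: "A * (x1 + x2) + B = 0" using h1 h2 d by simp
  have "(x1 - x3) * (A * (x1 + x3) + B) = (A * x1^2 + B * x1 + C) - (A * x3^2 + B * x3 + C)"
    by (simp add: algebra_simps power2_eq_square)
  hence k2: "A * (x1 + x3) + B = 0" using h1 h3 d by simp
  have "A * (x2 - x3) = (A * (x1 + x2) + B) - (A * (x1 + x3) + B)" by (simp add: algebra_simps)
  hence "A = 0" using k1 k2 d by simp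
  hence "B = 0" using k1 by simp
  hence "C = 0" using h1 \<open>A = 0\<close> by simp
  thus ?thesis using \<open>A = 0\<close> \<open>B = 0\<close> unfolding u v A_def B_def C_def by simp
qed

lemma fst_inj_line:
  fixes u v :: "'a::field \<times> 'a \<times> 'a"
  assumes "xp \<noteq> xq" "ev u xp = yp" "ev v xp = yp" "ev u xq = yq" "ev v xq = yq" "fst u = fst v"
  shows "u = v"
proof -
  obtain a b c where u: "u = (a, b, c)" by (cases u) auto
  obtain a' b' c' where v: "v = (a', b', c')" by (cases v) auto
  have a: "a = a'" using assms(6) u v by simp
  have i: "(b - b') * x + (c - c') = ev u x - ev v x" for x
    unfolding u v ev_def a by (simp add: algebra_simps)
  have e1: "(b - b') * xp + (c - c') = 0" using assms(2,3) i[of xp] by simp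
  have e2: "(b - b') * xq + (c - c') = 0" using assms(4,5) i[of xq] by simp
  have "(b - b') * (xp - xq) = ((b - b') * xp + (c - c')) - ((b - b') * xq + (c - c'))"
    by (simp add: algebra_simps)
  hence "b = b'" using e1 e2 assms(1) by simp
  hence "c = c'" using e1 by simp
  thus ?thesis using a \<open>b = b'\<close> u v by simp
qed

context fam begin


lemma snd_inj_line:
  fixes u v :: "'a \<times> 'a \<times> 'a"
  assumes "xp \<noteq> xq" "ev u xp = yp" "ev v xp = yp" "ev u xq = yq" "ev v xq = yq"
     "fst (snd u) = fst (snd v)"
  shows "u = v"
proof -
  obtain a b c where u: "u = (a, b, c)" by (cases u) auto
  obtain a' b' c' where v: "v = (a', b', c')" by (cases v) auto
  have b: "b = b'" using assms(6) u v by simp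
  have i: "(a - a') * x^2 + (c - c') = ev u x - ev v x" for x
    unfolding u v ev_def b by (simp add: algebra_simps)
  have e1: "(a - a') * xp^2 + (c - c') = 0" using assms(2,3) i[of xp] by simp
  have e2: "(a - a') * xq^2 + (c - c') = 0" using assms(4,5) i[of xq] by simp
  have "(a - a') * (xp^2 - xq^2) = ((a - a') * xp^2 + (c - c')) - ((a - a') * xq^2 + (c - c'))"
    by (simp add: algebra_simps)
  moreover have "xp^2 \<noteq> xq^2" using sq_inj[of xp xq] assms(1) by blast
  hence "xp^2 - xq^2 \<noteq> 0" by simp
  ultimately have "a = a'" using e1 e2 by simp
  hence "c = c'" using e1 by simp
  thus ?thesis using b \<open>a = a'\<close> u v by simp
qed

lemma fiber_inj:
  assumes "u \<in> V" "v \<in> V" "fst u = fst v" "fst (snd u) = fst (snd v)"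
  shows "u = v"
proof -
  obtain x where "ev u x = ev v x" using inter assms(1,2) by blast
  hence "snd (snd u) = snd (snd v)" using assms(3,4) unfolding ev_def by simp
  thus ?thesis using assms(3,4) by (simp add: prod_eq_iff)
qed

lemma two_roots:
  assumes "u \<in> V" "v \<in> V" "fst u \<noteq> fst v" "fst (snd u) \<noteq> fst (snd v)"
  shows "2 \<le> card {x. ev u x = ev v x}"
proof -
  obtain x1 where x1: "ev u x1 = ev v x1" using inter assms(1,2) by blast
  define A where "A = fst u - fst v"
  define B where "B = fst (snd u) - fst (snd v)"
  define C where "C = snd (snd u) - snd (snd v)"
  have D: "ev u x - ev v x = A * x^2 + B * x + C" for x
    unfolding A_def B_def C_def ev_def by (simp add: algebra_simps)
  have A: "A \<noteq> 0" and B: "B \<noteq> 0" using assms(3,4) A_def B_def by auto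
  define t where "t = B / A"
  have At: "A * t = B" unfolding t_def using A by simp
  define x2 where "x2 = x1 + t"
  have "A * x2^2 + B * x2 + C = (A * x1^2 + B * x1 + C) + 2 * (A * x1 * t) + (A * t) * t + B * t"
    unfolding x2_def by (simp add: algebra_simps power2_eq_square)
  also have "\<dots> = (A * x1^2 + B * x1 + C) + 2 * (A * x1 * t) + 2 * (B * t)"
    unfolding At by simp
  also have "\<dots> = 0" using two x1 D[of x1] by simp
  finally have "ev u x2 = ev v x2" using D[of x2] by simp
  moreover have "x1 \<noteq> x2" using A B x2_def t_def by simp
  ultimately have "{x1, x2} \<subseteq> {x. ev u x = ev v x}" using x1 by auto
  hence "card {x1, x2} \<le> card {x. ev u x = ev v x}" by (rule card_mono[rotated]) simp
  thus ?thesis using \<open>x1 \<noteq> x2\<close> by simp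
qed

lemma root_chi:
  assumes "u \<in> V" "v \<in> V" "ev u x0 = y" "ev v x0 = y'" "fst (snd u) \<noteq> fst (snd v)"
  shows "chi ((y - y') / (fst (snd u) - fst (snd v))^2 * (fst u - fst v)) = 1"
proof -
  obtain x1 where x1: "ev u x1 = ev v x1" using inter assms(1,2) by blast
  define A where "A = fst u - fst v"
  define B where "B = fst (snd u) - fst (snd v)"
  define C where "C = snd (snd u) - snd (snd v)"
  have D: "ev u x - ev v x = A * x^2 + B * x + C" for x
    unfolding A_def B_def C_def ev_def by (simp add: algebra_simps)
  define t where "t = x1 - x0"
  define d where "d = y - y'"
  have B: "B \<noteq> 0" using assms(5) B_def by auto
  have dd: "A * x0^2 + B * x0 + C = d" using D[of x0] assms(3,4) d_def by simp
  have "A * x1^2 + B * x1 + C = (A * x0^2 + B * x0 + C) + 2 * (A * x0 * t) + A * t^2 + B * t"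
    unfolding t_def by (simp add: algebra_simps power2_eq_square)
  hence e: "d + A * t^2 + B * t = 0" using x1 two D[of x1] dd by simp
  define w where "w = A * t / B"
  have "d / B^2 * A + (w^2 + w) = A / B^2 * (d + A * t^2 + B * t)"
    unfolding w_def using B by (simp add: field_simps power2_eq_square)
  hence "d / B^2 * A + (w^2 + w) = 0" using e by simp
  hence "d / B^2 * A = w^2 + w" by (metis add_self add_left_cancel add.commute)
  hence "d / B^2 * A \<in> H0" unfolding H0_def by auto
  thus ?thesis unfolding chi_def d_def A_def B_def by simp
qed

definition cls where "cls x y = {v\<in>V. ev v x = y}"

lemma line_le_q:
  assumes "xp \<noteq> xq"
  shows "card (cls xp yp \<inter> cls xq yq) \<le> CARD('a)"
proof -
  have "inj_on fst (cls xp yp \<inter> cls xq yq)"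
    unfolding inj_on_def cls_def using fst_inj_line[OF assms] by auto
  thus ?thesis by (rule card_inj_on_le) auto
qed

lemma line_le_half:
  assumes xpq: "xp \<noteq> xq" and f: "f \<in> V" "ev f xp \<noteq> yp" "ev f xq \<noteq> yq"
  shows "2 * card (cls xp yp \<inter> cls xq yq) \<le> CARD('a)"
proof -
  define L where "L = cls xp yp \<inter> cls xq yq"
  define R where "R h = {x. ev h x = ev f x}" for h
  have LV: "L \<subseteq> V" unfolding L_def cls_def by auto
  have Rsub: "R h \<subseteq> UNIV - {xp, xq}" if "h \<in> L" for h
    using that f unfolding R_def L_def cls_def by auto
  have disj: "R h \<inter> R h' = {}" if "h \<in> L" "h' \<in> L" "h \<noteq> h'" for h h'
  proof (rule ccontr)
    assume "R h \<inter> R h' \<noteq> {}"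
    then obtain x where x: "ev h x = ev f x" "ev h' x = ev f x" unfolding R_def by auto
    have "x \<noteq> xp" "x \<noteq> xq" using Rsub[OF that(1)] x unfolding R_def by auto
    moreover have "ev h xp = ev h' xp" "ev h xq = ev h' xq"
      using that unfolding L_def cls_def by auto
    ultimately have "h = h'" using three_pts[of xp xq x h h'] xpq x by auto
    thus False using that(3) by simp
  qed
  have "sum (\<lambda>h. card (R h)) L = card (\<Union>h\<in>L. R h)"
    by (rule card_UN_disjoint[symmetric]) (use disj in auto)
  also have "\<dots> \<le> card (UNIV - {xp, xq})" by (rule card_mono) (use Rsub in auto)
  also have "\<dots> = CARD('a) - 2" using xpq by (simp add: card_Diff_subset)
  finally have up: "sum (\<lambda>h. card (R h)) L \<le> CARD('a) - 2" .
  define E1 where "E1 = {h\<in>L. fst h = fst f}"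
  define E2 where "E2 = {h\<in>L. fst (snd h) = fst (snd f)}"
  have "\<forall>h\<in>E1. \<forall>h'\<in>E1. h = h'"
  proof (intro ballI)
    fix h h' assume "h \<in> E1" "h' \<in> E1"
    hence "ev h xp = yp" "ev h' xp = yp" "ev h xq = yq" "ev h' xq = yq" "fst h = fst h'"
      unfolding E1_def L_def cls_def by auto
    thus "h = h'" using fst_inj_line[OF xpq] by blast
  qed
  hence cE1: "card E1 \<le> 1" using card_le_Suc0_iff_eq[of E1] by simp
  have "\<forall>h\<in>E2. \<forall>h'\<in>E2. h = h'"
  proof (intro ballI)
    fix h h' assume "h \<in> E2" "h' \<in> E2"
    hence "ev h xp = yp" "ev h' xp = yp" "ev h xq = yq" "ev h' xq = yq" "fst (snd h) = fst (snd h')"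
      unfolding E2_def L_def cls_def by auto
    thus "h = h'" using snd_inj_line[OF xpq] by blast
  qed
  hence cE2: "card E2 \<le> 1" using card_le_Suc0_iff_eq[of E2] by simp
  have cE: "card (E1 \<union> E2) \<le> 2" using card_Un_le[of E1 E2] cE1 cE2 by simp
  have lb1: "\<forall>h\<in>L. 1 \<le> card (R h)"
  proof
    fix h assume h: "h \<in> L"
    then obtain x where "ev h x = ev f x" using inter LV f by blast
    hence "R h \<noteq> {}" unfolding R_def by auto
    thus "1 \<le> card (R h)" by (simp add: Suc_le_eq card_gt_0_iff)
  qed
  have lb2: "\<forall>h\<in>L - (E1 \<union> E2). 2 \<le> card (R h)"
  proof
    fix h assume h: "h \<in> L - (E1 \<union> E2)"
    hence "h \<in> V" "fst h \<noteq> fst f" "fst (snd h) \<noteq> fst (snd f)"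
      using LV unfolding E1_def E2_def by auto
    thus "2 \<le> card (R h)" unfolding R_def using two_roots f(1) by blast
  qed
  have "2 * card L \<le> sum (\<lambda>h. card (R h)) L + card (E1 \<union> E2)"
    by (rule sum_lb2[OF finite _ lb1 lb2]) (auto simp: E1_def E2_def)
  moreover have "card {xp, xq} \<le> CARD('a)" by (rule card_mono) auto
  hence "2 \<le> CARD('a)" using xpq by simp
  ultimately have "2 * card L \<le> CARD('a)" using up cE by linarith
  thus ?thesis unfolding L_def .
qed

end

lemma card_ind:
  assumes "finite S"
  shows "card {h\<in>S. Q h} = (\<Sum>h\<in>S. if Q h then 1 else 0)"
  using sum.inter_filter[OF assms, of "\<lambda>_. 1::nat" Q] by simp

lemma dc:
  assumes "finite S"
  shows "(\<Sum>x\<in>(UNIV::'a::finite set). card {h\<in>S. P h x}) = (\<Sum>h\<in>S. card {x. P h x})"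
proof -
  have "(\<Sum>x\<in>(UNIV::'a set). card {h\<in>S. P h x}) = (\<Sum>x\<in>(UNIV::'a set). \<Sum>h\<in>S. if P h x then 1 else 0)"
    using card_ind[OF assms] by simp
  also have "\<dots> = (\<Sum>h\<in>S. \<Sum>x\<in>(UNIV::'a set). if P h x then 1 else 0)" by (rule sum.swap)
  also have "\<dots> = (\<Sum>h\<in>S. card {x. P h x})"
    using card_ind[of "UNIV::'a set"] by simp
  finally show ?thesis .
qed

context fam begin

definition cnt where "cnt x y = card (cls x y)"
definition Ar where "Ar x0 y r = {a. \<exists>c. (a, r, c) \<in> cls x0 y}"
definition rows where "rows x0 y = {r. Ar x0 y r \<noteq> {}}"

lemma cls_V: "cls x y \<subseteq> V" unfolding cls_def by auto

lemma row_bound: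
  assumes yy: "y \<noteq> y'"
  shows "card (Ar x0 y r) * card (rows x0 y') \<le> CARD('a)"
proof -
  define X where "X = Ar x0 y r"
  define \<beta> where "\<beta> = rows x0 y'"
  define \<Lambda> where "\<Lambda> = (\<lambda>s. (y - y') / (r - s)^2) ` (\<beta> - {r})"
  have d: "y - y' \<noteq> 0" using yy by simp
  have z: "0 \<notin> \<Lambda>" unfolding \<Lambda>_def using d by auto
  have inj: "inj_on (\<lambda>s. (y - y') / (r - s)^2) (\<beta> - {r})"
  proof (rule inj_onI)
    fix s s' assume s: "s \<in> \<beta> - {r}" "s' \<in> \<beta> - {r}" and e: "(y - y') / (r - s)^2 = (y - y') / (r - s')^2"
    have "(r - s)^2 \<noteq> 0" "(r - s')^2 \<noteq> 0" using s by auto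
    hence "(r - s)^2 = (r - s')^2" using e d by (simp add: field_simps)
    hence "r - s = r - s'" by (rule sq_inj)
    thus "s = s'" by simp
  qed
  have cL: "card \<Lambda> = card (\<beta> - {r})" unfolding \<Lambda>_def using inj by (simp add: card_image)
  have cb: "card \<beta> \<le> card (\<beta> - {r}) + 1"
  proof (cases "r \<in> \<beta>")
    case True
    hence "card \<beta> > 0" by (auto simp: card_gt_0_iff)
    thus ?thesis using True by (simp add: card_Diff_singleton_if)
  qed (simp add: card_Diff_singleton_if)
  have cond: "\<forall>l\<in>\<Lambda>. \<forall>x\<in>X. \<forall>x'\<in>X. chi (l * (x - x')) = 1"
  proof (intro ballI)
    fix l x x' assume l: "l \<in> \<Lambda>" and x: "x \<in> X" and x': "x' \<in> X"
    then obtain s where s: "s \<in> \<beta>" "s \<noteq> r" and ls: "l = (y - y') / (r - s)^2" unfolding \<Lambda>_def by auto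
    obtain b c'' where bB: "(b, s, c'') \<in> cls x0 y'" using s(1) unfolding \<beta>_def rows_def Ar_def by auto
    obtain c where cA: "(x, r, c) \<in> cls x0 y" using x unfolding X_def Ar_def by auto
    obtain c' where cA': "(x', r, c') \<in> cls x0 y" using x' unfolding X_def Ar_def by auto
    have h1: "chi (l * (x - b)) = 1"
      using root_chi[of "(x, r, c)" "(b, s, c'')" x0 y y'] cA bB s(2) unfolding cls_def ls by auto
    have h2: "chi (l * (x' - b)) = 1"
      using root_chi[of "(x', r, c')" "(b, s, c'')" x0 y y'] cA' bB s(2) unfolding cls_def ls by auto
    have "l * (x - x') = l * (x - b) - l * (x' - b)" by (simp add: algebra_simps)
    also have "\<dots> = l * (x - b) + l * (x' - b)" by (rule diff_add)
    finally have "l * (x - x') = l * (x - b) + l * (x' - b)" .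
    hence "chi (l * (x - x')) = chi (l * (x - b)) * chi (l * (x' - b))" by (simp add: chi_add)
    thus "chi (l * (x - x')) = 1" using h1 h2 by simp
  qed
  have "card X * (card \<Lambda> + 1) \<le> CARD('a)" by (rule HL[OF z cond])
  moreover have "card X * card \<beta> \<le> card X * (card \<Lambda> + 1)"
    by (rule mult_le_mono2) (use cb cL in linarith)
  ultimately show ?thesis unfolding X_def \<beta>_def by linarith
qed

end

context fam begin
lemma cnt_rows: "cnt x0 y = (\<Sum>r\<in>(UNIV::'a set). card (Ar x0 y r))"
proof -
  have g: "(\<Sum>r\<in>(UNIV::'a set). \<Sum>v\<in>{v\<in>cls x0 y. fst (snd v) = r}. 1::nat) = (\<Sum>v\<in>cls x0 y. 1)"
    by (rule sum.group) auto
  have "\<And>r. card {v\<in>cls x0 y. fst (snd v) = r} = card (Ar x0 y r)"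
  proof -
    fix r
    define S where "S = {v\<in>cls x0 y. fst (snd v) = r}"
    have "Ar x0 y r = fst ` S"
    proof (intro set_eqI iffI)
      fix a assume "a \<in> Ar x0 y r"
      then obtain c where "(a, r, c) \<in> cls x0 y" unfolding Ar_def by blast
      hence "(a, r, c) \<in> S" unfolding S_def by simp
      thus "a \<in> fst ` S" by (rule rev_image_eqI) simp
    next
      fix a assume "a \<in> fst ` S"
      then obtain v where v: "v \<in> S" "a = fst v" by blast
      obtain a' b c where vv: "v = (a', b, c)" by (cases v) blast
      have "v \<in> cls x0 y" "b = r" using v vv unfolding S_def by auto
      hence "(a, r, c) \<in> cls x0 y" using v vv by simp
      thus "a \<in> Ar x0 y r" unfolding Ar_def by blast
    qed
    moreover have "inj_on fst S"
    proof (rule inj_onI)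
      fix u v assume "u \<in> S" "v \<in> S" "fst u = fst v"
      moreover hence "u \<in> V" "v \<in> V" "fst (snd u) = fst (snd v)" unfolding S_def cls_def by auto
      ultimately show "u = v" using fiber_inj by blast
    qed
    ultimately show "card {v\<in>cls x0 y. fst (snd v) = r} = card (Ar x0 y r)"
      unfolding S_def by (simp add: card_image)
  qed
  thus ?thesis using g unfolding cnt_def by simp
qed

lemma half_prod:
  assumes "y \<noteq> y'"
  shows "cnt x0 y * card (rows x0 y') \<le> CARD('a) * card (rows x0 y)"
proof -
  have "cnt x0 y * card (rows x0 y') = (\<Sum>r\<in>(UNIV::'a set). card (Ar x0 y r) * card (rows x0 y'))"
    unfolding cnt_rows by (simp add: sum_distrib_right)
  also have "\<dots> \<le> (\<Sum>r\<in>(UNIV::'a set). if r \<in> rows x0 y then CARD('a) else 0)"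
  proof (rule sum_mono)
    fix r :: 'a
    show "card (Ar x0 y r) * card (rows x0 y') \<le> (if r \<in> rows x0 y then CARD('a) else 0)"
    proof (cases "r \<in> rows x0 y")
      case True thus ?thesis using row_bound[OF assms, of x0 r] by simp
    next
      case False hence "Ar x0 y r = {}" unfolding rows_def by simp
      thus ?thesis by simp
    qed
  qed
  also have "\<dots> = (\<Sum>r\<in>rows x0 y. CARD('a))"
    by (rule sum.mono_neutral_cong_right) auto
  also have "\<dots> = CARD('a) * card (rows x0 y)" by simp
  finally show ?thesis .
qed

lemma prod_bound:
  assumes "y \<noteq> y'"
  shows "cnt x0 y * cnt x0 y' \<le> CARD('a)^2"
proof (cases "rows x0 y = {} \<or> rows x0 y' = {}")
  case True
  hence "cnt x0 y = 0 \<or> cnt x0 y' = 0"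
  proof
    assume "rows x0 y = {}"
    hence "\<And>r. Ar x0 y r = {}" unfolding rows_def by blast
    thus ?thesis unfolding cnt_rows by simp
  next
    assume "rows x0 y' = {}"
    hence "\<And>r. Ar x0 y' r = {}" unfolding rows_def by blast
    thus ?thesis unfolding cnt_rows by simp
  qed
  thus ?thesis by auto
next
  case False
  hence p: "card (rows x0 y) > 0" "card (rows x0 y') > 0" by (auto simp: card_gt_0_iff)
  have h1: "cnt x0 y * card (rows x0 y') \<le> CARD('a) * card (rows x0 y)" by (rule half_prod[OF assms])
  have h2: "cnt x0 y' * card (rows x0 y) \<le> CARD('a) * card (rows x0 y')" by (rule half_prod) (use assms in auto)
  have "(cnt x0 y * card (rows x0 y')) * (cnt x0 y' * card (rows x0 y))
        \<le> (CARD('a) * card (rows x0 y)) * (CARD('a) * card (rows x0 y'))"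
    by (rule mult_le_mono[OF h1 h2])
  hence "(cnt x0 y * cnt x0 y') * (card (rows x0 y) * card (rows x0 y'))
        \<le> CARD('a)^2 * (card (rows x0 y) * card (rows x0 y'))"
    by (simp add: power2_eq_square mult_ac)
  thus ?thesis using p by simp
qed

lemma big_unique:
  assumes "cnt x y > CARD('a)" "cnt x y' > CARD('a)"
  shows "y = y'"
proof (rule ccontr)
  assume "y \<noteq> y'"
  hence "cnt x y * cnt x y' \<le> CARD('a)^2" by (rule prod_bound)
  moreover have "CARD('a) * CARD('a) < cnt x y * cnt x y'"
    by (rule mult_strict_mono[OF assms(1) assms(2)]) (use assms in auto)
  ultimately show False by (simp add: power2_eq_square)
qed

end

context fam begin

lemma T_bound:
  assumes g: "g \<in> V"
  shows "card {h\<in>V - {g}. fst h = fst g \<or> fst (snd h) = fst (snd g)} \<le> 2 * (CARD('a) - 1)"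
proof -
  define T1 where "T1 = {h\<in>V - {g}. fst h = fst g}"
  define T2 where "T2 = {h\<in>V - {g}. fst (snd h) = fst (snd g)}"
  have "inj_on (\<lambda>h. fst (snd h)) T1"
  proof (rule inj_onI)
    fix u v assume "u \<in> T1" "v \<in> T1" "fst (snd u) = fst (snd v)"
    thus "u = v" using fiber_inj unfolding T1_def by auto
  qed
  moreover have "(\<lambda>h. fst (snd h)) ` T1 \<subseteq> UNIV - {fst (snd g)}"
  proof
    fix b assume "b \<in> (\<lambda>h. fst (snd h)) ` T1"
    then obtain h where h: "h \<in> T1" "b = fst (snd h)" by blast
    have "h \<noteq> g" "h \<in> V" "fst h = fst g" using h unfolding T1_def by auto
    hence "fst (snd h) \<noteq> fst (snd g)" using fiber_inj g by blast
    thus "b \<in> UNIV - {fst (snd g)}" using h by simp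
  qed
  ultimately have c1: "card T1 \<le> CARD('a) - 1"
    using card_inj_on_le[of "\<lambda>h. fst (snd h)" T1 "UNIV - {fst (snd g)}"] by (simp add: card_Diff_subset)
  have "inj_on fst T2"
  proof (rule inj_onI)
    fix u v assume "u \<in> T2" "v \<in> T2" "fst u = fst v"
    thus "u = v" using fiber_inj unfolding T2_def by auto
  qed
  moreover have "fst ` T2 \<subseteq> UNIV - {fst g}"
  proof
    fix b assume "b \<in> fst ` T2"
    then obtain h where h: "h \<in> T2" "b = fst h" by blast
    have "h \<noteq> g" "h \<in> V" "fst (snd h) = fst (snd g)" using h unfolding T2_def by auto
    hence "fst h \<noteq> fst g" using fiber_inj g by blast
    thus "b \<in> UNIV - {fst g}" using h by simp
  qed
  ultimately have c2: "card T2 \<le> CARD('a) - 1"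
    using card_inj_on_le[of fst T2 "UNIV - {fst g}"] by (simp add: card_Diff_subset)
  have "{h\<in>V - {g}. fst h = fst g \<or> fst (snd h) = fst (snd g)} = T1 \<union> T2"
    unfolding T1_def T2_def by auto
  hence "card {h\<in>V - {g}. fst h = fst g \<or> fst (snd h) = fst (snd g)} \<le> card T1 + card T2"
    using card_Un_le by simp
  thus ?thesis using c1 c2 by linarith
qed

lemma sum_roots_lb:
  assumes g: "g \<in> V" and S: "S \<subseteq> V - {g}"
  shows "2 * card S \<le> (\<Sum>h\<in>S. card {x. ev h x = ev g x}) + 2 * (CARD('a) - 1)"
proof -
  define E where "E = S \<inter> {h\<in>V - {g}. fst h = fst g \<or> fst (snd h) = fst (snd g)}"
  have cE: "card E \<le> 2 * (CARD('a) - 1)"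
    using T_bound[OF g] card_mono[of "{h\<in>V - {g}. fst h = fst g \<or> fst (snd h) = fst (snd g)}" E]
    unfolding E_def by auto
  have lb1: "\<forall>h\<in>S. 1 \<le> card {x. ev h x = ev g x}"
  proof
    fix h assume h: "h \<in> S"
    then obtain x where "ev h x = ev g x" using inter S g by blast
    hence "{x. ev h x = ev g x} \<noteq> {}" by auto
    thus "1 \<le> card {x. ev h x = ev g x}" by (simp add: Suc_le_eq card_gt_0_iff)
  qed
  have lb2: "\<forall>h\<in>S - E. 2 \<le> card {x. ev h x = ev g x}"
  proof
    fix h assume h: "h \<in> S - E"
    hence "h \<in> V" "fst h \<noteq> fst g" "fst (snd h) \<noteq> fst (snd g)" using S unfolding E_def by auto
    thus "2 \<le> card {x. ev h x = ev g x}" using two_roots g by blast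
  qed
  have "2 * card S \<le> (\<Sum>h\<in>S. card {x. ev h x = ev g x}) + card E"
    by (rule sum_lb2[OF finite _ lb1 lb2]) (auto simp: E_def)
  thus ?thesis using cE by linarith
qed

lemma per_f:
  assumes f: "f \<in> V"
  shows "2 * card V \<le> (\<Sum>x\<in>(UNIV::'a set). cnt x (ev f x)) + CARD('a)"
proof -
  have "(\<Sum>x\<in>(UNIV::'a set). cnt x (ev f x)) = (\<Sum>h\<in>V. card {x. ev h x = ev f x})"
    unfolding cnt_def cls_def by (rule dc) simp
  also have "\<dots> = card {x. ev f x = ev f x} + (\<Sum>h\<in>V - {f}. card {x. ev h x = ev f x})"
    using f by (simp add: sum.remove)
  also have "card {x. ev f x = ev f x} = CARD('a)" by simp
  finally have e: "(\<Sum>x\<in>(UNIV::'a set). cnt x (ev f x)) = CARD('a) + (\<Sum>h\<in>V - {f}. card {x. ev h x = ev f x})" .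
  have "2 * card (V - {f}) \<le> (\<Sum>h\<in>V - {f}. card {x. ev h x = ev f x}) + 2 * (CARD('a) - 1)"
    by (rule sum_roots_lb[OF f]) simp
  moreover have "card (V - {f}) = card V - 1" using f by simp
  moreover have "card V \<ge> 1" using f by (auto simp: Suc_le_eq card_gt_0_iff)
  moreover have "CARD('a) \<ge> 1" by (simp add: Suc_le_eq)
  ultimately show ?thesis using e by linarith
qed

lemma dichotomy:
  assumes R1: "CARD('a)^2 + 3 * CARD('a) < 2 * card V + 2"
    and g: "g \<in> V" "ev g xp \<noteq> yp"
  shows "4 * cnt xp yp + 4 \<le> CARD('a)^2 + 4 * CARD('a)"
proof -
  define A where "A = cls xp yp"
  define m where "m = card A"
  define t where "t x = card {h\<in>A. ev h x = ev g x}" for x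
  have AV: "A \<subseteq> V - {g}" using g unfolding A_def cls_def by auto
  have sumt: "(\<Sum>x\<in>(UNIV::'a set). t x) = (\<Sum>h\<in>A. card {x. ev h x = ev g x})"
    unfolding t_def by (rule dc) simp
  have lb: "2 * m \<le> (\<Sum>x\<in>(UNIV::'a set). t x) + 2 * (CARD('a) - 1)"
    unfolding sumt m_def by (rule sum_roots_lb[OF g(1) AV])
  have txp: "t xp = 0" unfolding t_def A_def cls_def using g by auto
  have tcls: "{h\<in>A. ev h x = ev g x} = cls xp yp \<inter> cls x (ev g x)" for x
    unfolding A_def cls_def by auto
  have tq: "t x \<le> CARD('a)" if "x \<noteq> xp" for x
    unfolding t_def tcls using line_le_q that by auto
  define Bad where "Bad = {x. x \<noteq> xp \<and> (\<forall>f\<in>V. ev f xp = yp \<or> ev f x = ev g x)}"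
  have th: "2 * t x \<le> CARD('a)" if "x \<noteq> xp" "x \<notin> Bad" for x
  proof -
    have "\<not> (\<forall>f\<in>V. ev f xp = yp \<or> ev f x = ev g x)" using that unfolding Bad_def by blast
    then obtain f where "f \<in> V" "ev f xp \<noteq> yp" "ev f x \<noteq> ev g x" by blast
    thus ?thesis unfolding t_def tcls using line_le_half that(1) by auto
  qed
  have "(\<Sum>x\<in>(UNIV::'a set). t x) = t xp + (\<Sum>x\<in>UNIV - {xp}. t x)"
    by (simp add: sum.remove)
  also have "\<dots> \<le> 0 + (\<Sum>x\<in>UNIV - {xp}. CARD('a))"
  proof -
    have "(\<Sum>x\<in>UNIV - {xp}. t x) \<le> (\<Sum>x\<in>UNIV - {xp}. CARD('a))"
      by (rule sum_mono) (use tq in auto)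
    thus ?thesis using txp by simp
  qed
  also have "\<dots> = (CARD('a) - 1) * CARD('a)" by (simp add: card_Diff_subset)
  finally have M0: "2 * m \<le> (CARD('a) - 1) * CARD('a) + 2 * (CARD('a) - 1)" using lb by linarith
  have cB: "card Bad \<le> 1"
  proof (rule ccontr)
    assume "\<not> card Bad \<le> 1"
    hence "card Bad \<ge> 2" by simp
    then obtain x1 x2 where x12: "x1 \<in> Bad" "x2 \<in> Bad" "x1 \<noteq> x2"
      by (metis One_nat_def card_le_Suc0_iff_eq finite not_less_eq_eq numeral_2_eq_2)
    have "V - A \<subseteq> cls x1 (ev g x1) \<inter> cls x2 (ev g x2)"
      using x12 unfolding Bad_def A_def cls_def by auto
    hence "card (V - A) \<le> card (cls x1 (ev g x1) \<inter> cls x2 (ev g x2))"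
      by (intro card_mono) auto
    hence "card (V - A) \<le> CARD('a)"
      using line_le_q[OF x12(3), of "ev g x1" "ev g x2"] by linarith
    moreover have "card (V - A) = card V - m" unfolding m_def using AV by (intro card_Diff_subset) auto
    moreover have "m \<le> card V" unfolding m_def using AV card_mono[of V A] by auto
    ultimately have "card V \<le> m + CARD('a)" by linarith
    hence "2 * card V \<le> (CARD('a) - 1) * CARD('a) + 2 * (CARD('a) - 1) + 2 * CARD('a)" using M0 by linarith
    moreover obtain k where k: "CARD('a) = Suc k" using not0_implies_Suc[of "CARD('a)"] by auto
    ultimately have "2 * card V + 2 \<le> CARD('a)^2 + 3 * CARD('a)"
      by (simp add: power2_eq_square algebra_simps)
    thus False using R1 by linarith
  qed
  have "(\<Sum>x\<in>(UNIV::'a set). 2 * t x) \<le> (\<Sum>x\<in>(UNIV::'a set). (if x = xp then 0 else CARD('a)) + (if x \<in> Bad then CARD('a) else 0))"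
  proof (rule sum_mono)
    fix x :: 'a
    show "2 * t x \<le> (if x = xp then 0 else CARD('a)) + (if x \<in> Bad then CARD('a) else 0)"
    proof (cases "x = xp")
      case True thus ?thesis using txp by simp
    next
      case False
      show ?thesis
      proof (cases "x \<in> Bad")
        case True thus ?thesis using tq[OF False] False by simp
      next
        case nb: False thus ?thesis using th[OF False nb] False by simp
      qed
    qed
  qed
  also have "\<dots> = (\<Sum>x\<in>(UNIV::'a set). if x = xp then 0 else CARD('a)) + (\<Sum>x\<in>(UNIV::'a set). if x \<in> Bad then CARD('a) else 0)"
    by (rule sum.distrib)
  also have "(\<Sum>x\<in>(UNIV::'a set). if x = xp then 0 else CARD('a)) = (\<Sum>x\<in>UNIV - {xp}. CARD('a))"
    by (rule sum.mono_neutral_cong_right) auto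
  also have "(\<Sum>x\<in>(UNIV::'a set). if x \<in> Bad then CARD('a) else 0) = (\<Sum>x\<in>Bad. CARD('a))"
    by (rule sum.mono_neutral_cong_right) auto
  also have "(\<Sum>x\<in>UNIV - {xp}. CARD('a)) + (\<Sum>x\<in>Bad. CARD('a)) = (CARD('a) - 1) * CARD('a) + card Bad * CARD('a)"
    by (simp add: card_Diff_subset)
  finally have "2 * (\<Sum>x\<in>(UNIV::'a set). t x) \<le> (CARD('a) - 1) * CARD('a) + card Bad * CARD('a)"
    by (simp add: sum_distrib_left)
  also have "\<dots> \<le> (CARD('a) - 1) * CARD('a) + 1 * CARD('a)"
    using cB by (intro add_left_mono mult_right_mono) auto
  also have "\<dots> = CARD('a) * CARD('a)"
    using Suc_le_eq[of 0 "CARD('a)"] by (simp add: algebra_simps diff_mult_distrib)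
  finally have "2 * (\<Sum>x\<in>(UNIV::'a set). t x) \<le> CARD('a) * CARD('a)" .
  hence "4 * m \<le> CARD('a) * CARD('a) + 4 * (CARD('a) - 1)" using lb by linarith
  moreover obtain k where k: "CARD('a) = Suc k" using not0_implies_Suc[of "CARD('a)"] by auto
  ultimately show ?thesis unfolding m_def A_def cnt_def by (simp add: power2_eq_square)
qed

end

lemma final_ineq:
  fixes W Q k L :: int
  assumes k3: "k \<ge> 3" and W: "W \<ge> 1" and kW: "(k + 1) * W \<ge> L" and Q: "Q \<ge> 4"
    and c: "Q = 4 \<or> 3 * L \<ge> 2 * Q^2"
  shows "(W + Q) * (k * (k - 1)) > (Q - 1) * (Q - 2)"
proof -
  have P6: "k * (k - 1) \<ge> 6"
  proof -
    have "k * (k - 1) \<ge> 3 * 2" by (rule mult_mono) (use k3 in auto)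
    thus ?thesis by simp
  qed
  show ?thesis
  proof (cases "Q = 4")
    case True
    have "(W + Q) * (k * (k - 1)) \<ge> 5 * 6" by (rule mult_mono) (use W True P6 in auto)
    thus ?thesis using True by simp
  next
    case False
    hence L: "3 * L \<ge> 2 * Q^2" using c by simp
    show ?thesis
    proof (rule ccontr)
      assume "\<not> ?thesis"
      hence a: "(W + Q) * (k * (k - 1)) \<le> (Q - 1) * (Q - 2)" by simp
      define P where "P = k * (k - 1)"
      have Ppos: "P > 0" using P6 P_def by simp
      have "W * P + Q * P \<le> Q^2 - 3 * Q + 2" using a unfolding P_def by (simp add: algebra_simps power2_eq_square)
      moreover have "Q * P > 0" using Q Ppos by simp
      ultimately have h1: "W * P < Q^2" using Q by linarith
      have h2: "2 * Q^2 \<le> 3 * ((k + 1) * W)" using L kW by linarith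
      have "2 * Q^2 * P \<le> 3 * ((k + 1) * W) * P" by (rule mult_right_mono[OF h2]) (use Ppos in simp)
      also have "\<dots> = (3 * (k + 1)) * (W * P)" by (simp add: algebra_simps)
      also have "\<dots> < (3 * (k + 1)) * Q^2" by (rule mult_strict_left_mono[OF h1]) (use k3 in simp)
      finally have "(2 * P) * Q^2 < (3 * (k + 1)) * Q^2" by (simp add: algebra_simps)
      hence "2 * P < 3 * (k + 1)" using Q by (simp add: mult_less_cancel_right)
      moreover have "2 * P - 3 * (k + 1) = (2 * k + 1) * (k - 3)" unfolding P_def by (simp add: algebra_simps)
      moreover have "(2 * k + 1) * (k - 3) \<ge> 0" by (rule mult_nonneg_nonneg) (use k3 in auto)
      ultimately show False by linarith
    qed
  qed
qed

context fam begin

lemma card_ge2: "CARD('a) \<ge> 2"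
proof -
  have "card {0::'a, 1} \<le> CARD('a)" by (rule card_mono) auto
  thus ?thesis by simp
qed

lemma main:
  assumes R1: "CARD('a)^2 + 3 * CARD('a) < 2 * card V + 2"
    and R2: "7 * CARD('a)^2 + 4 * CARD('a) < 8 * card V + 12"
    and R3: "CARD('a) = 4 \<or> 5 * CARD('a)^2 + 3 * CARD('a) \<le> 6 * card V"
    and Q4: "CARD('a) \<ge> 4"
    and Vne: "V \<noteq> {}"
  shows "\<exists>x y. \<forall>v\<in>V. ev v x = y"
proof (rule ccontr)
  assume nc: "\<not> (\<exists>x y. \<forall>v\<in>V. ev v x = y)"
  define Q where "Q = int CARD('a)"
  define N where "N = int (card V)"
  define L where "L = 2 * N - Q - Q^2"
  define Bf where "Bf f = {x. cnt x (ev f x) > CARD('a)}" for f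
  have Qge: "Q \<ge> 4" unfolding Q_def using Q4 by simp
  have "int (7 * CARD('a)^2 + 4 * CARD('a)) < int (8 * card V + 12)" using R2 by (simp only: of_nat_less_iff)
  hence R2i: "7 * Q^2 + 4 * Q < 8 * N + 12" unfolding Q_def N_def by simp
  have Lpos: "4 * L > 3 * Q^2 - 12" using R2i unfolding L_def by (simp add: algebra_simps)
  have exc: "(\<Sum>x\<in>Bf f. int (cnt x (ev f x)) - Q) \<ge> L" if f: "f \<in> V" for f
  proof -
    have pf: "2 * N \<le> (\<Sum>x\<in>(UNIV::'a set). int (cnt x (ev f x))) + Q"
      using per_f[OF f] unfolding N_def Q_def by (simp flip: of_nat_sum of_nat_mult of_nat_add)
    have "(\<Sum>x\<in>(UNIV::'a set). int (cnt x (ev f x)) - Q) = (\<Sum>x\<in>(UNIV::'a set). int (cnt x (ev f x))) - Q * Q"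
      unfolding Q_def by (simp add: sum_subtractf)
    hence s1: "(\<Sum>x\<in>(UNIV::'a set). int (cnt x (ev f x)) - Q) \<ge> L"
      using pf unfolding L_def by (simp add: power2_eq_square)
    have "(\<Sum>x\<in>(UNIV::'a set). int (cnt x (ev f x)) - Q)
        = (\<Sum>x\<in>UNIV - Bf f. int (cnt x (ev f x)) - Q) + (\<Sum>x\<in>Bf f. int (cnt x (ev f x)) - Q)"
      by (rule sum.subset_diff) auto
    moreover have "(\<Sum>x\<in>UNIV - Bf f. int (cnt x (ev f x)) - Q) \<le> 0"
      by (rule sum_nonpos) (auto simp: Bf_def Q_def)
    ultimately show ?thesis using s1 by linarith
  qed
  define Big where "Big = {p::'a \<times> 'a. cnt (fst p) (snd p) > CARD('a)}"
  obtain f0 where f0: "f0 \<in> V" using Vne by auto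
  have "Bf f0 \<noteq> {}"
  proof
    assume "Bf f0 = {}"
    hence "L \<le> 0" using exc[OF f0] by simp
    moreover have "3 * Q^2 - 12 \<ge> 0"
    proof -
      have "Q * Q \<ge> 4 * 4" by (rule mult_mono) (use Qge in auto)
      thus ?thesis by (simp add: power2_eq_square)
    qed
    ultimately show False using Lpos by linarith
  qed
  then obtain x0 where "x0 \<in> Bf f0" by auto
  hence BigNE: "Big \<noteq> {}" unfolding Big_def Bf_def by auto
  define cntp where "cntp p = cnt (fst p) (snd p)" for p
  define Mx where "Mx = Max (cntp ` Big)"
  have "Mx \<in> cntp ` Big" unfolding Mx_def by (rule Max_in) (use BigNE in auto)
  then obtain xs ys where ps: "(xs, ys) \<in> Big" "cnt xs ys = Mx" unfolding cntp_def by auto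
  have maxp: "cnt x y \<le> Mx" if "(x, y) \<in> Big" for x y
  proof -
    have "cntp (x, y) \<in> cntp ` Big" using that by (rule imageI)
    hence "cntp (x, y) \<le> Mx" unfolding Mx_def by (intro Max_ge) auto
    thus ?thesis unfolding cntp_def by simp
  qed
  define M where "M = cnt xs ys"
  have MQ: "M > CARD('a)" using ps(1) unfolding Big_def M_def by simp
  obtain g where g: "g \<in> V" "ev g xs \<noteq> ys" using nc by blast
  have Mb: "4 * M + 4 \<le> CARD('a)^2 + 4 * CARD('a)"
    unfolding M_def by (rule dichotomy[OF R1 g])
  define W where "W = int M - Q"
  have W1: "W \<ge> 1" unfolding W_def Q_def using MQ by simp
  have W3: "3 * W < L"
  proof -
    have "4 * int M + 4 \<le> Q^2 + 4 * Q" using Mb unfolding Q_def by (simp flip: of_nat_mult of_nat_add of_nat_power)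
    hence "12 * W \<le> 3 * Q^2 - 12" unfolding W_def by (simp add: algebra_simps)
    thus ?thesis using Lpos by linarith
  qed
  define A where "A = cls xs ys"
  define K where "K f = Bf f - {xs}" for f
  have cA: "card A = M" unfolding A_def M_def cnt_def by simp
  have fxs: "xs \<in> Bf f" if "f \<in> A" for f
    using that MQ unfolding A_def cls_def Bf_def M_def by simp
  have kprop: "int (card (K f)) \<ge> 3 \<and> (int (card (K f)) + 1) * W \<ge> L" if f: "f \<in> A" for f
  proof -
    have fV: "f \<in> V" and fy: "ev f xs = ys" using f unfolding A_def cls_def by auto
    have "(\<Sum>x\<in>Bf f. int (cnt x (ev f x)) - Q) = (int (cnt xs (ev f xs)) - Q) + (\<Sum>x\<in>K f. int (cnt x (ev f x)) - Q)"
      unfolding K_def using fxs[OF f] by (simp add: sum.remove)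
    also have "int (cnt xs (ev f xs)) - Q = W" unfolding W_def M_def fy by simp
    finally have sK: "(\<Sum>x\<in>K f. int (cnt x (ev f x)) - Q) \<ge> L - W" using exc[OF fV] by linarith
    have "(\<Sum>x\<in>K f. int (cnt x (ev f x)) - Q) \<le> (\<Sum>x\<in>K f. W)"
    proof (rule sum_mono)
      fix x assume "x \<in> K f"
      hence "(x, ev f x) \<in> Big" unfolding K_def Bf_def Big_def by simp
      hence "cnt x (ev f x) \<le> M" using maxp ps(2) M_def by simp
      thus "int (cnt x (ev f x)) - Q \<le> W" unfolding W_def by simp
    qed
    hence "int (card (K f)) * W \<ge> L - W" using sK by simp
    hence kW: "(int (card (K f)) + 1) * W \<ge> L" by (simp add: algebra_simps)
    have "int (card (K f)) * W > 2 * W" using \<open>int (card (K f)) * W \<ge> L - W\<close> W3 by linarith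
    hence "int (card (K f)) > 2" using W1 by (intro mult_right_less_imp_less[of 2 W]) auto
    thus ?thesis using kW by simp
  qed
  define S where "S = Sigma A (\<lambda>f. Sigma (K f) (\<lambda>x. K f - {x}))"
  define T where "T = Sigma (UNIV - {xs}) (\<lambda>x. UNIV - {xs, x})"
  have cS: "card S = (\<Sum>f\<in>A. card (K f) * (card (K f) - 1))"
  proof -
    have "card S = (\<Sum>f\<in>A. card (Sigma (K f) (\<lambda>x. K f - {x})))"
      unfolding S_def by (rule card_SigmaI) auto
    also have "\<dots> = (\<Sum>f\<in>A. card (K f) * (card (K f) - 1))"
    proof (rule sum.cong[OF refl])
      fix f
      have "card (Sigma (K f) (\<lambda>x. K f - {x})) = (\<Sum>x\<in>K f. card (K f - {x}))"
        by (rule card_SigmaI) auto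
      also have "\<dots> = (\<Sum>x\<in>K f. card (K f) - 1)" by (rule sum.cong) auto
      also have "\<dots> = card (K f) * (card (K f) - 1)" by simp
      finally show "card (Sigma (K f) (\<lambda>x. K f - {x})) = card (K f) * (card (K f) - 1)" .
    qed
    finally show ?thesis .
  qed
  have cT: "card T = (CARD('a) - 1) * (CARD('a) - 2)"
  proof -
    have "card T = (\<Sum>x\<in>UNIV - {xs}. card (UNIV - {xs, x}))"
      unfolding T_def by (rule card_SigmaI) auto
    also have "\<dots> = (\<Sum>x\<in>UNIV - {xs}. CARD('a) - 2)"
      by (rule sum.cong) (auto simp: card_Diff_subset)
    also have "\<dots> = (CARD('a) - 1) * (CARD('a) - 2)" by (simp add: card_Diff_subset)
    finally show ?thesis .
  qed
  have "card S \<le> card T"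
  proof (rule card_inj_on_le)
    show "inj_on snd S"
    proof (rule inj_onI)
      fix p p' assume p: "p \<in> S" "p' \<in> S" "snd p = snd p'"
      obtain f x x' where pe: "p = (f, x, x')" by (cases p) auto
      obtain f' where pe': "p' = (f', x, x')" using p(3) pe by (cases p') auto
      have m: "f \<in> A" "x \<in> K f" "x' \<in> K f" "x' \<noteq> x" using p(1) pe unfolding S_def by auto
      have m': "f' \<in> A" "x \<in> K f'" "x' \<in> K f'" using p(2) pe' unfolding S_def by auto
      have "ev f x = ev f' x"
        by (rule big_unique) (use m m' in \<open>auto simp: K_def Bf_def\<close>)
      moreover have "ev f x' = ev f' x'"
        by (rule big_unique) (use m m' in \<open>auto simp: K_def Bf_def\<close>)
      moreover have "ev f xs = ev f' xs" using m(1) m'(1) unfolding A_def cls_def by simp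
      moreover have "xs \<noteq> x" "xs \<noteq> x'" using m unfolding K_def by auto
      ultimately have "f = f'" using three_pts[of xs x x' f f'] m(4) by auto
      thus "p = p'" using pe pe' by simp
    qed
    show "snd ` S \<subseteq> T" unfolding S_def T_def K_def by auto
    show "finite T" by simp
  qed
  have tri: "(\<Sum>f\<in>A. int (card (K f) * (card (K f) - 1))) \<le> (int CARD('a) - 1) * (int CARD('a) - 2)"
  proof -
    have "(\<Sum>f\<in>A. card (K f) * (card (K f) - 1)) \<le> (CARD('a) - 1) * (CARD('a) - 2)"
      using \<open>card S \<le> card T\<close> cS cT by simp
    hence a: "int (\<Sum>f\<in>A. card (K f) * (card (K f) - 1)) \<le> int ((CARD('a) - 1) * (CARD('a) - 2))"
      by (simp only: of_nat_le_iff)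
    have b: "int (\<Sum>f\<in>A. card (K f) * (card (K f) - 1)) = (\<Sum>f\<in>A. int (card (K f) * (card (K f) - 1)))"
      by (rule of_nat_sum)
    have c: "int ((CARD('a) - 1) * (CARD('a) - 2)) = (int CARD('a) - 1) * (int CARD('a) - 2)"
      using card_ge2 by (simp add: of_nat_diff)
    show ?thesis using a b c by linarith
  qed
  have Ane: "A \<noteq> {}" using cA MQ by auto
  have "(\<Sum>f\<in>A. (Q - 1) * (Q - 2)) < (\<Sum>f\<in>A. (W + Q) * int (card (K f) * (card (K f) - 1)))"
  proof (rule sum_strict_mono[OF finite Ane])
    fix f assume f: "f \<in> A"
    have k: "int (card (K f)) \<ge> 3" "(int (card (K f)) + 1) * W \<ge> L" using kprop[OF f] by auto
    have c3: "Q = 4 \<or> 3 * L \<ge> 2 * Q^2"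
    proof (cases "CARD('a) = 4")
      case True thus ?thesis unfolding Q_def by simp
    next
      case False
      hence "5 * CARD('a)^2 + 3 * CARD('a) \<le> 6 * card V" using R3 by simp
      hence "int (5 * CARD('a)^2 + 3 * CARD('a)) \<le> int (6 * card V)" by (simp only: of_nat_le_iff)
      hence "5 * Q^2 + 3 * Q \<le> 6 * N" unfolding Q_def N_def by simp
      hence "2 * Q^2 \<le> 3 * L" unfolding L_def by (simp add: algebra_simps)
      thus ?thesis by simp
    qed
    have ineq: "(W + Q) * (int (card (K f)) * (int (card (K f)) - 1)) > (Q - 1) * (Q - 2)"
      by (rule final_ineq[OF k(1) W1 k(2) Qge c3])
    have kk1: "1 \<le> card (K f)" using k(1) by simp
    have eqn: "int (card (K f) * (card (K f) - 1)) = int (card (K f)) * (int (card (K f)) - 1)"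
      by (simp only: of_nat_mult of_nat_diff[OF kk1] of_nat_1)
    show "(Q - 1) * (Q - 2) < (W + Q) * int (card (K f) * (card (K f) - 1))"
      unfolding eqn by (rule ineq)
  qed
  hence "int M * ((Q - 1) * (Q - 2)) < (W + Q) * (\<Sum>f\<in>A. int (card (K f) * (card (K f) - 1)))"
    using cA by (simp add: sum_distrib_left)
  moreover have "W + Q = int M" unfolding W_def by simp
  ultimately have "(Q - 1) * (Q - 2) < (\<Sum>f\<in>A. int (card (K f) * (card (K f) - 1)))"
    using MQ by (simp add: mult_less_cancel_left)
  thus False using tri unfolding Q_def by simp
qed

end

lemma poly_deg2:
  fixes f :: "'a::comm_ring_1 poly"
  assumes "degree f \<le> 2"
  shows "poly f x = ev (coeff f 2, coeff f 1, coeff f 0) x"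
proof -
  have "f = pCons (coeff f 0) (pCons (coeff f 1) (pCons (coeff f 2) 0))"
  proof (rule poly_eqI)
    fix n show "coeff f n = coeff (pCons (coeff f 0) (pCons (coeff f 1) (pCons (coeff f 2) 0))) n"
    proof (cases n)
      case 0 thus ?thesis by simp
    next
      case (Suc n1) note n1 = this
      show ?thesis
      proof (cases n1)
        case 0 thus ?thesis using n1 by simp
      next
        case (Suc n2) note n2 = this
        show ?thesis
        proof (cases n2)
          case 0 thus ?thesis using n1 n2 by (simp add: numeral_2_eq_2)
        next
          case (Suc n3)
          hence "coeff f n = 0" using n1 n2 assms by (intro coeff_eq_0) simp
          thus ?thesis using n1 n2 Suc by simp
        qed
      qed
    qed
  qed
  hence "poly f x = poly (pCons (coeff f 0) (pCons (coeff f 1) (pCons (coeff f 2) 0))) x" by simp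
  also have "\<dots> = ev (coeff f 2, coeff f 1, coeff f 0) x"
    by (simp add: ev_def algebra_simps power2_eq_square)
  finally show ?thesis .
qed

lemma deg2_eq:
  fixes f g :: "'a::comm_ring_1 poly"
  assumes "degree f \<le> 2" "degree g \<le> 2"
    and "(coeff f 2, coeff f 1, coeff f 0) = (coeff g 2, coeff g 1, coeff g 0)"
  shows "f = g"
proof (rule poly_eqI)
  fix n show "coeff f n = coeff g n"
  proof (cases "n \<le> 2")
    case True
    hence "n = 0 \<or> n = 1 \<or> n = 2" by auto
    thus ?thesis using assms(3) by auto
  next
    case False
    hence "coeff f n = 0" "coeff g n = 0" using assms(1,2) by (auto intro: coeff_eq_0)
    thus ?thesis by simp
  qed
qed

theorem theorem5:
  fixes U :: "('a::{finite,field}) poly set" and q :: nat and \<epsilon> :: real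
  assumes "CARD('a) = q"
    and "\<exists>k. q = 2 ^ k"
    and "q > 2"
    and "\<forall>f\<in>U. degree f \<le> 2"
    and "intersecting U"
    and "real (card U) = real q ^ 2 - \<epsilon>"
    and "\<epsilon> < real q * sqrt (real q) / 4 - real q / 8 - sqrt (real q) / 8"
  shows "\<exists>P. \<forall>f\<in>U. P \<in> poly_graph f"
proof -
  obtain k where k: "q = 2 ^ k" using assms(2) by blast
  have k2: "k \<ge> 2"
  proof (rule ccontr)
    assume "\<not> k \<ge> 2"
    hence "k = 0 \<or> k = 1" by auto
    thus False using k assms(3) by auto
  qed
  have two: "(2::'a) = 0" by (rule char2[of k]) (use assms(1) k k2 in auto)
  define cf where "cf f = (coeff f 2, coeff f 1, coeff f 0)" for f :: "'a poly"
  define V where "V = cf ` U"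
  have evp: "poly f x = ev (cf f) x" if "f \<in> U" for f x
    unfolding cf_def using poly_deg2 assms(4) that by blast
  have inj: "inj_on cf U"
    by (rule inj_onI) (use deg2_eq assms(4) in \<open>auto simp: cf_def\<close>)
  have cV: "card V = card U" unfolding V_def using inj by (simp add: card_image)
  have inter: "\<forall>u\<in>V. \<forall>v\<in>V. \<exists>x. ev u x = ev v x"
  proof (intro ballI)
    fix u v assume "u \<in> V" "v \<in> V"
    then obtain f g where fg: "f \<in> U" "g \<in> U" "u = cf f" "v = cf g" unfolding V_def by auto
    have "poly_graph f \<inter> poly_graph g \<noteq> {}" using assms(5) fg unfolding intersecting_def by blast
    then obtain x where "poly f x = poly g x" unfolding poly_graph_def by auto
    thus "\<exists>x. ev u x = ev v x" using evp fg by metis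
  qed
  interpret fam V using two inter by (rule fam.intro)
  define n where "n = card V"
  have nreal: "real n = real q ^ 2 - \<epsilon>" unfolding n_def cV using assms(6) .
  have num: "(q = 4 \<and> n \<ge> 15) \<or> (q = 8 \<and> n \<ge> 60) \<or> (q \<ge> 16 \<and> 16 * n > 15 * q^2)"
  proof -
    have "k = 2 \<or> k = 3 \<or> k \<ge> 4" using k2 by auto
    moreover
    { assume "k = 2"
      hence q4: "q = 4" using k by simp
      have "sqrt (4::real) = sqrt (2^2)" by simp
      also have "\<dots> = 2" by (simp add: real_sqrt_abs)
      finally have s: "sqrt (4::real) = 2" .
      have "\<epsilon> < 5 / 4" using assms(7) q4 s by simp
      hence "real n > 59 / 4" using nreal q4 by simp
      hence "n \<ge> 15" by linarith
      hence ?thesis using q4 by simp }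
    moreover
    { assume "k = 3"
      hence q8: "q = 8" using k by simp
      have "sqrt (8::real) < sqrt 9" by (rule real_sqrt_less_mono) simp
      also have "sqrt (9::real) = sqrt (3^2)" by simp
      also have "\<dots> = 3" by (simp add: real_sqrt_abs)
      finally have s: "sqrt (8::real) < 3" .
      have "\<epsilon> < 8 * sqrt 8 / 4 - 1 - sqrt 8 / 8" using assms(7) q8 by simp
      hence "\<epsilon> < 37 / 8" using s by linarith
      hence "real n > 64 - 37 / 8" using nreal q8 by simp
      hence "n \<ge> 60" by linarith
      hence ?thesis using q8 by simp }
    moreover
    { assume "k \<ge> 4"
      hence "(2::nat)^4 \<le> 2^k" by (intro power_increasing) auto
      hence q16: "q \<ge> 16" using k by simp
      have "sqrt (real q) \<le> sqrt ((real q / 4)^2)"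
      proof (rule real_sqrt_le_mono)
        have "real q * 16 \<le> real q * real q" using q16 by (intro mult_left_mono) auto
        thus "real q \<le> (real q / 4)^2" by (simp add: power2_eq_square field_simps)
      qed
      also have "\<dots> = real q / 4" by (simp add: real_sqrt_abs)
      finally have s: "sqrt (real q) \<le> real q / 4" .
      have m: "real q * sqrt (real q) \<le> real q * (real q / 4)" using s by (intro mult_left_mono) auto
      have "real q * sqrt (real q) / 4 \<le> real q * (real q / 4) / 4" using m by (rule divide_right_mono) simp
      moreover have "sqrt (real q) \<ge> 0" "real q \<ge> 0" by simp_all
      ultimately have "\<epsilon> < real q * (real q / 4) / 4" using assms(7) by linarith
      hence "16 * real n > 15 * real q ^ 2" using nreal by (simp add: power2_eq_square field_simps)
      hence "real (16 * n) > real (15 * q^2)" by simp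
      hence "16 * n > 15 * q^2" by (simp only: of_nat_less_iff)
      hence ?thesis using q16 by simp }
    ultimately show ?thesis by blast
  qed
  have R: "CARD('a)^2 + 3 * CARD('a) < 2 * card V + 2
      \<and> 7 * CARD('a)^2 + 4 * CARD('a) < 8 * card V + 12
      \<and> (CARD('a) = 4 \<or> 5 * CARD('a)^2 + 3 * CARD('a) \<le> 6 * card V)
      \<and> CARD('a) \<ge> 4 \<and> V \<noteq> {}"
  proof -
    have Vne: "n \<ge> 1 \<Longrightarrow> V \<noteq> {}" unfolding n_def by auto
    from num show ?thesis
    proof (elim disjE conjE)
      assume "q = 4" "n \<ge> 15" thus ?thesis using assms(1) Vne unfolding n_def by simp
    next
      assume "q = 8" "n \<ge> 60" thus ?thesis using assms(1) Vne unfolding n_def by simp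
    next
      assume q16: "q \<ge> 16" and nq: "16 * n > 15 * q^2"
      have qq: "q * q \<ge> 16 * q" using q16 by simp
      have nq': "16 * n > 15 * (q * q)" using nq by (simp only: power2_eq_square)
      have "n \<ge> 1" using nq' by (rule_tac ccontr) simp
      hence "V \<noteq> {}" by (rule Vne)
      moreover have "q * q + 3 * q < 2 * n + 2" using nq' qq by linarith
      moreover have "7 * (q * q) + 4 * q < 8 * n + 12" using nq' qq by linarith
      moreover have "5 * (q * q) + 3 * q \<le> 6 * n" using nq' qq by linarith
      ultimately show ?thesis using assms(1) q16 unfolding n_def by (simp add: power2_eq_square)
    qed
  qed
  have "\<exists>x y. \<forall>v\<in>V. ev v x = y" by (rule main) (use R in auto)
  then obtain x y where xy: "\<forall>v\<in>V. ev v x = y" by blast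
  have "\<forall>f\<in>U. (x, y) \<in> poly_graph f"
  proof
    fix f assume f: "f \<in> U"
    have "poly f x = y" using evp[OF f] xy f unfolding V_def by auto
    thus "(x, y) \<in> poly_graph f" unfolding poly_graph_def by auto
  qed
  thus ?thesis by blast
qed

end
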